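(* Let $f:[0,\infty)\to\mathbb{C}$ be smooth with support in $[0,\rho]$ for some $\rho<1$. For $i,j\in\mathbb{N}_0$ and $t\in(0,1)$ let $$G_{i,j}(t)=\int_{1-t}^{1}u f(u)\,[Q(t,u)]^{i}\,(u^{2}+1-t^{2})^{j}\,\mathrm{d}u,\qquad Q(t,u)=((1+t)^2-u^2)(u^2-(1-t)^2),$$ and $h_k(t)=G_{k,0}(t)=\int_{1-t}^{1}uf(u)[Q(t,u)]^k\,\mathrm{d}u$. Then for every $k\geq 1$ and $t\in(0,1)$, $$\left[D^{2k}h_{k}\right](t)=\left[D^{2k}G_{k,0}\right](t)=k!\,4^{k}\sum_{j=0}^{k-1}(-1)^{j}\frac{(k-1+j)!}{(k-1-j)!\,j!}\left[D^{k-j}G_{0,k-j}\right](t).$$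
   Context: $D$ denotes the operator $(D\varphi)(t)=\frac{1}{t}\varphi'(t)$ and $D^{j}$ its $j$-fold iterate. *)

theory Defs
  imports "HOL-Analysis.Analysis"
begin

definition Dop :: "(real \<Rightarrow> complex) \<Rightarrow> real \<Rightarrow> complex" where
  "Dop \<phi> t = vector_derivative \<phi> (at t) / complex_of_real t"

definition smooth_on_nonneg :: "(real \<Rightarrow> complex) \<Rightarrow> bool" where
  "smooth_on_nonneg f \<longleftrightarrow>
     (\<exists>fd :: nat \<Rightarrow> real \<Rightarrow> complex.
        (\<forall>x\<ge>0. fd 0 x = f x) \<and>
        (\<forall>n. \<forall>x\<ge>0. (fd n has_vector_derivative fd (Suc n) x) (at x within {0..})))"

definition Qfun :: "real \<Rightarrow> real \<Rightarrow> real" where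
  "Qfun t u = ((1 + t)^2 - u^2) * (u^2 - (1 - t)^2)"

definition Gfun :: "(real \<Rightarrow> complex) \<Rightarrow> nat \<Rightarrow> nat \<Rightarrow> real \<Rightarrow> complex" where
  "Gfun f i j t = integral {1 - t..1}
     (\<lambda>u. complex_of_real (u * (Qfun t u) ^ i * (u^2 + 1 - t^2) ^ j) * f u)"

definition hfun :: "(real \<Rightarrow> complex) \<Rightarrow> nat \<Rightarrow> real \<Rightarrow> complex" where
  "hfun f k t = integral {1 - t..1} (\<lambda>u. complex_of_real (u * (Qfun t u) ^ k) * f u)"

end

theory Submission
  imports Defs
begin

fun smn :: "nat \<Rightarrow> (real \<Rightarrow> complex) \<Rightarrow> bool" where
  "smn 0 F = True"
| "smn (Suc n) F = (\<exists>F'. (\<forall>t\<in>{0<..<1}. (F has_vector_derivative F' t) (at t)) \<and> smn n F')"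

lemma smn_cong: "smn n F \<Longrightarrow> (\<And>t. t \<in> {0<..<1} \<Longrightarrow> F t = G t) \<Longrightarrow> smn n G"
proof (cases n)
  case (Suc m)
  assume "smn n F" and eq: "\<And>t. t \<in> {0<..<1} \<Longrightarrow> F t = G t"
  then obtain F' where d: "\<forall>t\<in>{0<..<1}. (F has_vector_derivative F' t) (at t)" and s: "smn m F'"
    using Suc by auto
  have "\<forall>t\<in>{0<..<1::real}. (G has_vector_derivative F' t) (at t)"
    using d eq by (metis has_vector_derivative_transform_within_open open_greaterThanLessThan)
  with s Suc show ?thesis by auto
qed simp

lemma smn_mono: "smn (Suc n) F \<Longrightarrow> smn n F"
proof (induction n arbitrary: F)
  case 0 then show ?case by simp
next
  case (Suc n)
  then obtain F' where "\<forall>t\<in>{0<..<1}. (F has_vector_derivative F' t) (at t)" "smn (Suc n) F'" by auto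
  with Suc.IH show ?case by auto
qed


lemma smn_add: "smn n F \<Longrightarrow> smn n G \<Longrightarrow> smn n (\<lambda>t. F t + G t)"
proof (induction n arbitrary: F G)
  case (Suc n)
  then obtain F' G' where "\<forall>t\<in>{0<..<1}. (F has_vector_derivative F' t) (at t)" "smn n F'"
     "\<forall>t\<in>{0<..<1}. (G has_vector_derivative G' t) (at t)" "smn n G'" by auto
  then show ?case using Suc.IH by (auto intro!: exI[of _ "\<lambda>t. F' t + G' t"] derivative_eq_intros)
qed simp

lemma smn_const: "smn n (\<lambda>t. c)"
  by (induction n arbitrary: c) (auto intro!: exI[of _ "\<lambda>t. 0"] derivative_eq_intros)

lemma smn_mult: "smn n F \<Longrightarrow> smn n G \<Longrightarrow> smn n (\<lambda>t. F t * G t)"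
proof (induction n arbitrary: F G)
  case (Suc n)
  then obtain F' G' where d: "\<forall>t\<in>{0<..<1}. (F has_vector_derivative F' t) (at t)" "smn n F'"
     "\<forall>t\<in>{0<..<1}. (G has_vector_derivative G' t) (at t)" "smn n G'" by auto
  have "smn n (\<lambda>t. F t * G' t + F' t * G t)"
    using d smn_mono[OF Suc.prems(1)] smn_mono[OF Suc.prems(2)] by (intro smn_add Suc.IH) auto
  then show ?case using d
    by (auto intro!: exI[of _ "\<lambda>t. F t * G' t + F' t * G t"] has_vector_derivative_mult)
qed simp

lemma smn_id: "smn n (\<lambda>t. complex_of_real t)"
proof (cases n)
  case (Suc m)
  have "((\<lambda>t. complex_of_real t) has_vector_derivative 1) (at t)" for t
    using has_vector_derivative_of_real[OF DERIV_ident] by simp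
  then show ?thesis using Suc smn_const[of m 1] by (auto intro!: exI[of _ "\<lambda>t. 1"])
qed simp

lemma smn_cmult: "smn n F \<Longrightarrow> smn n (\<lambda>t. c * F t)"
  using smn_mult[OF smn_const] by blast

lemma smn_neg: "smn n F \<Longrightarrow> smn n (\<lambda>t. - F t)"
  using smn_cmult[of n F "-1"] by simp

lemma smn_diff: "smn n F \<Longrightarrow> smn n G \<Longrightarrow> smn n (\<lambda>t. F t - G t)"
  using smn_add[OF _ smn_neg, of n F G] by simp

lemma smn_pow: "smn n F \<Longrightarrow> smn n (\<lambda>t. F t ^ m)"
  by (induction m) (auto intro: smn_const smn_mult)

lemma smn_inv: "smn n (\<lambda>t. inverse (complex_of_real t))"
proof (induction n)
  case (Suc n)
  have "((\<lambda>t. inverse (complex_of_real t)) has_vector_derivative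
          - (inverse (complex_of_real t) * inverse (complex_of_real t))) (at t)"
    if "t \<in> {0<..<1}" for t
  proof -
    have "((\<lambda>t. complex_of_real (inverse t)) has_vector_derivative
          complex_of_real (- (inverse t ^ 2))) (at t)"
      using that by (intro has_vector_derivative_of_real) (auto intro!: derivative_eq_intros simp: power2_eq_square field_simps)
    then show ?thesis by (simp add: power2_eq_square)
  qed
  moreover have "smn n (\<lambda>t. - (inverse (complex_of_real t) * inverse (complex_of_real t)))"
    using Suc by (intro smn_neg smn_mult)
  ultimately show ?case
    by (auto intro!: exI[of _ "\<lambda>t. - (inverse (complex_of_real t) * inverse (complex_of_real t))"])
qed simp

lemmas smn_intros = smn_const smn_id smn_add smn_mult smn_diff smn_neg smn_pow smn_inv smn_cmult

definition smooth01 :: "(real \<Rightarrow> complex) \<Rightarrow> bool" where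
  "smooth01 F \<longleftrightarrow> (\<forall>n. smn n F)"

lemma fd_smooth:
  assumes "\<forall>n. \<forall>x\<ge>0. (fd n has_vector_derivative fd (Suc n) x) (at x within {0..})"
  shows "smn n (\<lambda>t. fd m (1 - t))"
proof (induction n arbitrary: m)
  case (Suc n)
  have "((\<lambda>t. fd m (1 - t)) has_vector_derivative - fd (Suc m) (1 - t)) (at t)"
    if "t \<in> {0<..<1}" for t
  proof -
    have "(fd m has_vector_derivative fd (Suc m) (1 - t)) (at (1 - t) within {0..})"
      using assms that by auto
    moreover have "at (1 - t) within {0..} = at (1 - t)"
      using that by (intro at_within_interior) auto
    ultimately have d: "(fd m has_vector_derivative fd (Suc m) (1 - t)) (at (1 - t))" by simp
    have "((\<lambda>t. 1 - t) has_vector_derivative (-1)) (at t)"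
      by (auto intro!: derivative_eq_intros)
    from vector_diff_chain_at[OF this] d show ?thesis by (simp add: o_def)
  qed
  moreover have "smn n (\<lambda>t. - fd (Suc m) (1 - t))"
    using Suc by (intro smn_neg)
  ultimately show ?case by (auto intro!: exI[of _ "\<lambda>t. - fd (Suc m) (1 - t)"])
qed simp

lemma vd_local:
  assumes "\<And>s. s \<in> {0<..<1} \<Longrightarrow> F s = G s" "t \<in> {0<..<1::real}"
  shows "vector_derivative F (at t) = vector_derivative G (at t)"
proof -
  have "(F has_vector_derivative d) (at t) \<longleftrightarrow> (G has_vector_derivative d) (at t)" for d
    using assms has_vector_derivative_transform_within_open[of _ d t "{0<..<1}"]
    by (metis open_greaterThanLessThan)
  then show ?thesis unfolding vector_derivative_def by simp
qed

lemma Dop_local: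
  assumes "\<And>s. s \<in> {0<..<1} \<Longrightarrow> F s = G s" "t \<in> {0<..<1::real}"
  shows "Dop F t = Dop G t"
  using vd_local[OF assms] by (simp add: Dop_def)

lemma Dopn_local:
  assumes "\<And>s. s \<in> {0<..<1} \<Longrightarrow> F s = G s" "t \<in> {0<..<1::real}"
  shows "(Dop ^^ n) F t = (Dop ^^ n) G t"
  using assms(2)
proof (induction n arbitrary: t)
  case (Suc n)
  have "Dop ((Dop ^^ n) F) t = Dop ((Dop ^^ n) G) t"
    by (rule Dop_local) (use Suc in auto)
  then show ?case by simp
qed (simp add: assms)

lemma smn_Dop:
  assumes "smn (Suc n) F" shows "smn n (Dop F)"
proof -
  obtain F' where d: "\<forall>t\<in>{0<..<1}. (F has_vector_derivative F' t) (at t)" and s: "smn n F'"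
    using assms by auto
  have "smn n (\<lambda>t. F' t * inverse (complex_of_real t))"
    using s by (intro smn_mult smn_inv)
  then show ?thesis
    by (rule smn_cong) (use d in \<open>auto simp: Dop_def divide_inverse intro!: vector_derivative_at[symmetric]\<close>)
qed

lemma smooth_Dop: "smooth01 F \<Longrightarrow> smooth01 (Dop F)"
  unfolding smooth01_def using smn_Dop by blast

lemma smooth_Dopn: "smooth01 F \<Longrightarrow> smooth01 ((Dop ^^ n) F)"
  by (induction n) (auto intro: smooth_Dop)

lemma Dop_lin:
  assumes "smooth01 F" "smooth01 G" "t \<in> {0<..<1::real}"
  shows "Dop (\<lambda>s. a * F s + b * G s) t = a * Dop F t + b * Dop G t"
proof -
  obtain F' where dF: "\<forall>t\<in>{0<..<1}. (F has_vector_derivative F' t) (at t)"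
    using assms(1) unfolding smooth01_def by (metis smn.simps(2))
  obtain G' where dG: "\<forall>t\<in>{0<..<1}. (G has_vector_derivative G' t) (at t)"
    using assms(2) unfolding smooth01_def by (metis smn.simps(2))
  have "((\<lambda>s. a * F s + b * G s) has_vector_derivative a * F' t + b * G' t) (at t)"
    using dF dG assms(3) by (auto intro!: derivative_eq_intros)
  moreover have "vector_derivative F (at t) = F' t" "vector_derivative G (at t) = G' t"
    using dF dG assms(3) by (auto intro!: vector_derivative_at)
  ultimately show ?thesis
    by (simp add: Dop_def vector_derivative_at add_divide_distrib)
qed

lemma Dopn_lin:
  assumes "smooth01 F" "smooth01 G" "t \<in> {0<..<1::real}"
  shows "(Dop ^^ n) (\<lambda>s. a * F s + b * G s) t = a * (Dop ^^ n) F t + b * (Dop ^^ n) G t"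
  using assms
proof (induction n arbitrary: F G t)
  case 0 then show ?case by simp
next
  case (Suc n)
  have "(Dop ^^ Suc n) (\<lambda>s. a * F s + b * G s) t = (Dop ^^ n) (Dop (\<lambda>s. a * F s + b * G s)) t"
    by (simp add: funpow_Suc_right del: funpow.simps)
  also have "\<dots> = (Dop ^^ n) (\<lambda>s. a * Dop F s + b * Dop G s) t"
    by (rule Dopn_local) (use Suc.prems in \<open>auto intro: Dop_lin\<close>)
  also have "\<dots> = a * (Dop ^^ n) (Dop F) t + b * (Dop ^^ n) (Dop G) t"
    using Suc.prems by (intro Suc.IH smooth_Dop) auto
  also have "\<dots> = a * (Dop ^^ Suc n) F t + b * (Dop ^^ Suc n) G t"
    by (simp add: funpow_Suc_right del: funpow.simps)
  finally show ?case .
qed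

definition evL :: "(nat \<times> (real \<Rightarrow> real)) list \<Rightarrow> real \<Rightarrow> real \<Rightarrow> real" where
  "evL L t u = (\<Sum>p\<leftarrow>L. t ^ fst p * snd p u)"
definition evLd :: "(nat \<times> (real \<Rightarrow> real)) list \<Rightarrow> real \<Rightarrow> real \<Rightarrow> real" where
  "evLd L t u = (\<Sum>p\<leftarrow>L. real (fst p) * t ^ (fst p - 1) * snd p u)"
definition okL :: "(nat \<times> (real \<Rightarrow> real)) list \<Rightarrow> bool" where
  "okL L \<longleftrightarrow> (\<forall>p\<in>set L. continuous_on UNIV (snd p))"

lemma evL_Nil[simp]: "evL [] t u = 0" and evL_Cons[simp]: "evL (p # L) t u = t ^ fst p * snd p u + evL L t u"
  by (simp_all add: evL_def)
lemma evLd_Nil[simp]: "evLd [] t u = 0" and evLd_Cons[simp]: "evLd (p # L) t u = real (fst p) * t ^ (fst p - 1) * snd p u + evLd L t u"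
  by (simp_all add: evLd_def)
lemma okL_Nil[simp]: "okL []" and okL_Cons[simp]: "okL (p # L) \<longleftrightarrow> continuous_on UNIV (snd p) \<and> okL L"
  by (simp_all add: okL_def)

lemma evL_cont: "okL L \<Longrightarrow> continuous_on UNIV (\<lambda>u. evL L t u)"
  by (induction L) (auto intro!: continuous_intros)
lemma evLd_cont: "okL L \<Longrightarrow> continuous_on UNIV (\<lambda>u. evLd L t u)"
  by (induction L) (auto intro!: continuous_intros)

lemma evL_deriv: "((\<lambda>t. evL L t u) has_real_derivative evLd L t u) (at t)"
  by (induction L) (auto intro!: derivative_eq_intros simp: Suc_pred)

definition Psi :: "(real \<Rightarrow> real) \<Rightarrow> (real \<Rightarrow> complex) \<Rightarrow> real \<Rightarrow> complex" where
  "Psi c f x = integral {x..1} (\<lambda>u. complex_of_real (c u) * f u)"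

lemma Psi_deriv:
  assumes fc: "continuous_on {0..1} f" and cc: "continuous_on UNIV c" and x: "x \<in> {0<..<1}"
  shows "(Psi c f has_vector_derivative - (complex_of_real (c x) * f x)) (at x)"
proof -
  have "continuous_on {0..1} (\<lambda>u. complex_of_real (c u) * f u)"
    using fc cc by (intro continuous_intros) (auto intro: continuous_on_subset)
  from integral_has_vector_derivative'[OF this, of x] x
  have "(Psi c f has_vector_derivative - (complex_of_real (c x) * f x)) (at x within {0..1})"
    by (auto simp: Psi_def[abs_def])
  moreover have "at x within {0..1} = at x"
    using x by (intro at_within_interior) auto
  ultimately show ?thesis by simp
qed

lemma intcont:
  assumes fc: "continuous_on {0..1} f" and cc: "continuous_on UNIV c" and s: "s \<in> {0<..<1::real}"
  shows "(\<lambda>u. complex_of_real (c u) * f u) integrable_on {1 - s..1}"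
  using s by (intro integrable_continuous_interval continuous_intros continuous_on_subset[OF cc]
      continuous_on_subset[OF fc]) auto

lemma leibL:
  assumes fc: "continuous_on {0..1} f" and ok: "okL L" and t: "t \<in> {0<..<1::real}"
  shows "((\<lambda>s. integral {1-s..1} (\<lambda>u. complex_of_real (evL L s u) * f u)) has_vector_derivative
     (integral {1-t..1} (\<lambda>u. complex_of_real (evLd L t u) * f u) + complex_of_real (evL L t (1-t)) * f (1-t))) (at t)"
  using ok
proof (induction L)
  case Nil
  then show ?case by simp
next
  case (Cons p L)
  obtain e c where p: "p = (e, c)" by (cases p)
  have cc: "continuous_on UNIV c" and okL: "okL L" using Cons.prems p by auto
  have eq: "integral {1-s..1} (\<lambda>u. complex_of_real (evL (p # L) s u) * f u)
     = (s ^ e) *\<^sub>R Psi c f (1 - s) + integral {1-s..1} (\<lambda>u. complex_of_real (evL L s u) * f u)"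
    if s: "s \<in> {0<..<1}" for s
  proof -
    have "integral {1-s..1} (\<lambda>u. complex_of_real (evL (p # L) s u) * f u)
       = integral {1-s..1} (\<lambda>u. (s ^ e) *\<^sub>R (complex_of_real (c u) * f u) + complex_of_real (evL L s u) * f u)"
      by (simp add: p scaleR_conv_of_real algebra_simps)
    also have "\<dots> = integral {1-s..1} (\<lambda>u. (s ^ e) *\<^sub>R (complex_of_real (c u) * f u)) + integral {1-s..1} (\<lambda>u. complex_of_real (evL L s u) * f u)"
      by (intro integral_add integrable_cmul intcont[OF fc cc s] intcont[OF fc evL_cont[OF okL] s])
    finally show ?thesis by (simp add: Psi_def)
  qed
  have d1: "((\<lambda>s. Psi c f (1 - s)) has_vector_derivative complex_of_real (c (1 - t)) * f (1 - t)) (at t)"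
  proof -
    have "((\<lambda>s. 1 - s) has_vector_derivative (-1)) (at t)"
      by (auto intro!: derivative_eq_intros)
    from vector_diff_chain_at[OF this Psi_deriv[OF fc cc, of "1 - t"]] t
    show ?thesis by (simp add: o_def)
  qed
  have d2: "((\<lambda>s. (s ^ e) *\<^sub>R Psi c f (1 - s) + integral {1-s..1} (\<lambda>u. complex_of_real (evL L s u) * f u))
     has_vector_derivative
     ((t ^ e) *\<^sub>R (complex_of_real (c (1 - t)) * f (1 - t)) + (real e * t ^ (e - 1)) *\<^sub>R Psi c f (1 - t)
      + (integral {1-t..1} (\<lambda>u. complex_of_real (evLd L t u) * f u) + complex_of_real (evL L t (1-t)) * f (1-t)))) (at t)"
    using DERIV_pow[of e t UNIV]
    by (intro has_vector_derivative_add has_vector_derivative_scaleR d1 Cons.IH okL) simp_all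
  have d3: "((\<lambda>s. integral {1-s..1} (\<lambda>u. complex_of_real (evL (p # L) s u) * f u))
     has_vector_derivative
     ((t ^ e) *\<^sub>R (complex_of_real (c (1 - t)) * f (1 - t)) + (real e * t ^ (e - 1)) *\<^sub>R Psi c f (1 - t)
      + (integral {1-t..1} (\<lambda>u. complex_of_real (evLd L t u) * f u) + complex_of_real (evL L t (1-t)) * f (1-t)))) (at t)"
    by (rule has_vector_derivative_transform_within_open[OF d2 _ t]) (use eq in auto)
  have "integral {1-t..1} (\<lambda>u. complex_of_real (evLd (p # L) t u) * f u)
     = integral {1-t..1} (\<lambda>u. (real e * t ^ (e - 1)) *\<^sub>R (complex_of_real (c u) * f u) + complex_of_real (evLd L t u) * f u)"
    by (simp add: p scaleR_conv_of_real algebra_simps)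
  also have "\<dots> = (real e * t ^ (e - 1)) *\<^sub>R Psi c f (1 - t) + integral {1-t..1} (\<lambda>u. complex_of_real (evLd L t u) * f u)"
    by (subst integral_add) (auto intro!: integrable_cmul intcont[OF fc cc t] intcont[OF fc evLd_cont[OF okL] t] simp: Psi_def)
  finally have "integral {1-t..1} (\<lambda>u. complex_of_real (evLd (p # L) t u) * f u) + complex_of_real (evL (p # L) t (1-t)) * f (1-t)
     = (t ^ e) *\<^sub>R (complex_of_real (c (1 - t)) * f (1 - t)) + (real e * t ^ (e - 1)) *\<^sub>R Psi c f (1 - t)
      + (integral {1-t..1} (\<lambda>u. complex_of_real (evLd L t u) * f u) + complex_of_real (evL L t (1-t)) * f (1-t))"
    by (simp add: p scaleR_conv_of_real algebra_simps)
  with d3 show ?case by simp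
qed

definition prodL :: "(nat \<times> (real \<Rightarrow> real)) list \<Rightarrow> (nat \<times> (real \<Rightarrow> real)) list \<Rightarrow> (nat \<times> (real \<Rightarrow> real)) list" where
  "prodL L1 L2 = concat (map (\<lambda>p. map (\<lambda>q. (fst p + fst q, \<lambda>u. snd p u * snd q u)) L2) L1)"

lemma evL_append[simp]: "evL (L1 @ L2) t u = evL L1 t u + evL L2 t u"
  by (simp add: evL_def)

lemma okL_append[simp]: "okL (L1 @ L2) \<longleftrightarrow> okL L1 \<and> okL L2"
  by (auto simp: okL_def)

lemma evL_map: "evL (map (\<lambda>q. (e + fst q, \<lambda>u. c u * snd q u)) L2) t u = t ^ e * c u * evL L2 t u"
  by (induction L2) (auto simp: power_add algebra_simps)

lemma okL_map: "continuous_on UNIV c \<Longrightarrow> okL L2 \<Longrightarrow> okL (map (\<lambda>q. (e + fst q, \<lambda>u. c u * snd q u)) L2)"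
  by (induction L2) (auto intro!: continuous_intros)

lemma evL_prod: "evL (prodL L1 L2) t u = evL L1 t u * evL L2 t u"
  by (induction L1) (auto simp: prodL_def evL_map algebra_simps)

lemma okL_prod: "okL L1 \<Longrightarrow> okL L2 \<Longrightarrow> okL (prodL L1 L2)"
  by (induction L1) (auto simp: prodL_def intro: okL_map)

definition polyrep :: "(real \<Rightarrow> real \<Rightarrow> real) \<Rightarrow> bool" where
  "polyrep \<phi> \<longleftrightarrow> (\<exists>L. okL L \<and> (\<forall>t u. \<phi> t u = evL L t u))"

lemma polyrep_const: "continuous_on UNIV c \<Longrightarrow> polyrep (\<lambda>t u. c u)"
  unfolding polyrep_def by (intro exI[of _ "[(0, c)]"]) auto

lemma polyrep_t: "polyrep (\<lambda>t u. t)"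
  unfolding polyrep_def by (intro exI[of _ "[(1, \<lambda>u. 1)]"]) auto

lemma polyrep_add: "polyrep \<phi> \<Longrightarrow> polyrep \<psi> \<Longrightarrow> polyrep (\<lambda>t u. \<phi> t u + \<psi> t u)"
  unfolding polyrep_def by (metis evL_append okL_append)

lemma polyrep_mult: "polyrep \<phi> \<Longrightarrow> polyrep \<psi> \<Longrightarrow> polyrep (\<lambda>t u. \<phi> t u * \<psi> t u)"
  unfolding polyrep_def by (metis evL_prod okL_prod)

lemma polyrep_pow: "polyrep \<phi> \<Longrightarrow> polyrep (\<lambda>t u. \<phi> t u ^ n)"
  by (induction n) (auto intro: polyrep_mult polyrep_const)

lemma polyrep_diff: "polyrep \<phi> \<Longrightarrow> polyrep \<psi> \<Longrightarrow> polyrep (\<lambda>t u. \<phi> t u - \<psi> t u)"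
proof -
  assume a: "polyrep \<phi>" "polyrep \<psi>"
  have "polyrep (\<lambda>t u. \<phi> t u + (\<lambda>u. -1) u * \<psi> t u)"
    by (intro polyrep_add polyrep_mult polyrep_const a) auto
  then show ?thesis by simp
qed

definition phi :: "nat \<Rightarrow> nat \<Rightarrow> real \<Rightarrow> real \<Rightarrow> real" where
  "phi i j t u = u * Qfun t u ^ i * (u^2 + 1 - t^2) ^ j"

lemma Gfun_phi: "Gfun f i j = (\<lambda>t. integral {1-t..1} (\<lambda>u. complex_of_real (phi i j t u) * f u))"
  unfolding Gfun_def phi_def by (rule refl)

lemma polyrep_phi: "polyrep (phi i j)"
proof -
  have "polyrep (\<lambda>t u. (\<lambda>u. u) u * (((1 + t)^2 - (\<lambda>u. u^2) u) * ((\<lambda>u. u^2) u - (1 - t)^2)) ^ i * ((\<lambda>u. u^2 + 1) u - t^2) ^ j)"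
    by (intro polyrep_mult polyrep_pow polyrep_diff polyrep_add polyrep_const polyrep_t continuous_intros)
  then show ?thesis by (simp add: phi_def[abs_def] Qfun_def)
qed

lemma phi_cont: "continuous_on UNIV (phi i j t)"
  unfolding phi_def[abs_def] Qfun_def by (intro continuous_intros)

lemma phi_deriv: "((\<lambda>t. phi i j t u) has_real_derivative
    t * (4 * real i * phi (i - 1) (j + 1) t u - 2 * real j * phi i (j - 1) t u)) (at t)"
proof -
  have dQ: "((\<lambda>t. Qfun t u) has_real_derivative 4 * t * (u^2 + 1 - t^2)) (at t)"
    unfolding Qfun_def by (rule derivative_eq_intros refl | simp)+ (simp add: algebra_simps power2_eq_square)
  have dP: "((\<lambda>t. u^2 + 1 - t^2) has_real_derivative - 2 * t) (at t)"
    by (auto intro!: derivative_eq_intros)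
  have "((\<lambda>t. u * Qfun t u ^ i * (u^2 + 1 - t^2) ^ j) has_real_derivative
     u * (real i * Qfun t u ^ (i - 1) * (4 * t * (u^2 + 1 - t^2))) * (u^2 + 1 - t^2) ^ j
     + u * Qfun t u ^ i * (real j * (u^2 + 1 - t^2) ^ (j - 1) * (- 2 * t))) (at t)"
    by (auto intro!: derivative_eq_intros dQ dP simp: algebra_simps)
  moreover have "u * (real i * Qfun t u ^ (i - 1) * (4 * t * (u^2 + 1 - t^2))) * (u^2 + 1 - t^2) ^ j
     + u * Qfun t u ^ i * (real j * (u^2 + 1 - t^2) ^ (j - 1) * (- 2 * t))
     = t * (4 * real i * phi (i - 1) (j + 1) t u - 2 * real j * phi i (j - 1) t u)"
    by (simp add: phi_def algebra_simps)
  ultimately show ?thesis by (simp add: phi_def)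
qed

lemma G_deriv:
  assumes fc: "continuous_on {0..1} f" and t: "t \<in> {0<..<1::real}"
  shows "(Gfun f i j has_vector_derivative
     (complex_of_real t * (of_nat (4 * i) * Gfun f (i - 1) (j + 1) t - of_nat (2 * j) * Gfun f i (j - 1) t)
      + complex_of_real (phi i j t (1 - t)) * f (1 - t))) (at t)"
proof -
  obtain L where ok: "okL L" and L: "\<And>t u. phi i j t u = evL L t u"
    using polyrep_phi[of i j] unfolding polyrep_def by blast
  have Geq: "Gfun f i j = (\<lambda>s. integral {1-s..1} (\<lambda>u. complex_of_real (evL L s u) * f u))"
    unfolding Gfun_phi L ..
  have dL: "evLd L t u = t * (4 * real i * phi (i - 1) (j + 1) t u - 2 * real j * phi i (j - 1) t u)" for u
  proof -
    have "((\<lambda>t. evL L t u) has_real_derivative t * (4 * real i * phi (i - 1) (j + 1) t u - 2 * real j * phi i (j - 1) t u)) (at t)"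
      using phi_deriv[of i j u t] unfolding L .
    from DERIV_unique[OF evL_deriv this] show ?thesis .
  qed
  have int1: "(\<lambda>u. complex_of_real (phi a b t u) * f u) integrable_on {1 - t..1}" for a b
    by (rule intcont[OF fc phi_cont t])
  have "integral {1-t..1} (\<lambda>u. complex_of_real (evLd L t u) * f u)
     = integral {1-t..1} (\<lambda>u. (t * 4 * real i) *\<^sub>R (complex_of_real (phi (i - 1) (j + 1) t u) * f u)
          - (t * 2 * real j) *\<^sub>R (complex_of_real (phi i (j - 1) t u) * f u))"
    by (simp add: dL scaleR_conv_of_real algebra_simps)
  also have "\<dots> = (t * 4 * real i) *\<^sub>R Gfun f (i - 1) (j + 1) t - (t * 2 * real j) *\<^sub>R Gfun f i (j - 1) t"
    by (subst integral_diff) (auto intro!: integrable_cmul int1 simp: Gfun_phi)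
  also have "\<dots> = complex_of_real t * (of_nat (4 * i) * Gfun f (i - 1) (j + 1) t - of_nat (2 * j) * Gfun f i (j - 1) t)"
    by (simp add: scaleR_conv_of_real algebra_simps)
  finally have "integral {1-t..1} (\<lambda>u. complex_of_real (evLd L t u) * f u) = \<dots>" .
  with leibL[OF fc ok t] show ?thesis unfolding Geq by (simp add: L)
qed

lemma Dop_G:
  assumes fc: "continuous_on {0..1} f" and t: "t \<in> {0<..<1::real}"
  shows "Dop (Gfun f (Suc i) j) t = of_nat (4 * Suc i) * Gfun f i (j + 1) t + (- of_nat (2 * j)) * Gfun f (Suc i) (j - 1) t"
proof -
  have "phi (Suc i) j t (1 - t) = 0" by (simp add: phi_def Qfun_def)
  with G_deriv[OF fc t, of "Suc i" j] have
    "vector_derivative (Gfun f (Suc i) j) (at t) = complex_of_real t * (of_nat (4 * Suc i) * Gfun f i (j + 1) t - of_nat (2 * j) * Gfun f (Suc i) (j - 1) t)"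
    by (intro vector_derivative_at) simp
  then show ?thesis using t by (simp add: Dop_def)
qed

lemma smn_f:
  assumes fd: "\<forall>x\<ge>0. fd 0 x = f x" "\<forall>n. \<forall>x\<ge>0. (fd n has_vector_derivative fd (Suc n) x) (at x within {0..})"
  shows "smn n (\<lambda>t. f (1 - t))"
  by (rule smn_cong[OF fd_smooth[OF fd(2), of n 0]]) (use fd(1) in auto)

lemma smn_bd: "smn n (\<lambda>t. complex_of_real (phi i j t (1 - t)))"
proof -
  have "smn n (\<lambda>t. (1 - complex_of_real t) * (((1 + complex_of_real t)^2 - (1 - complex_of_real t)^2) * ((1 - complex_of_real t)^2 - (1 - complex_of_real t)^2)) ^ i * ((1 - complex_of_real t)^2 + 1 - (complex_of_real t)^2) ^ j)"
    by (intro smn_intros)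
  then show ?thesis by (rule smn_cong) (simp add: phi_def Qfun_def)
qed

lemma smooth_G:
  assumes fc: "continuous_on {0..1} f"
    and fd: "\<forall>x\<ge>0. fd 0 x = f x" "\<forall>n. \<forall>x\<ge>0. (fd n has_vector_derivative fd (Suc n) x) (at x within {0..})"
  shows "smooth01 (Gfun f i j)"
proof -
  have "\<forall>i j. smn n (Gfun f i j)" for n
  proof (induction n)
    case (Suc n)
    show ?case
    proof (intro allI)
      fix i j
      have "smn n (\<lambda>t. complex_of_real t * (of_nat (4 * i) * Gfun f (i - 1) (j + 1) t - of_nat (2 * j) * Gfun f i (j - 1) t)
          + complex_of_real (phi i j t (1 - t)) * f (1 - t))"
        using Suc.IH by (intro smn_intros smn_bd smn_f[OF fd]) auto
      then show "smn (Suc n) (Gfun f i j)"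
        using G_deriv[OF fc] by (auto intro!: exI[of _ "\<lambda>t. complex_of_real t * (of_nat (4 * i) * Gfun f (i - 1) (j + 1) t - of_nat (2 * j) * Gfun f i (j - 1) t)
          + complex_of_real (phi i j t (1 - t)) * f (1 - t)"])
    qed
  qed simp
  then show ?thesis unfolding smooth01_def by blast
qed

fun wc :: "nat \<Rightarrow> real \<Rightarrow> nat \<Rightarrow> real" where
  "wc a j 0 = 1"
| "wc 0 j (Suc r) = (j - real r) * wc 0 j r"
| "wc (Suc a) j (Suc r) = wc a j (Suc r) + (j + real (Suc a) - real r) * wc (Suc a) j r"

lemma FL0: fixes j :: real shows "wc 0 j (Suc r) = j * wc 0 (j - 1) r"
proof (induction r arbitrary: j)
  case 0 then show ?case by simp
next
  case (Suc r)
  have "wc 0 j (Suc (Suc r)) = (j - real (Suc r)) * wc 0 j (Suc r)" by simp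
  also have "\<dots> = (j - real (Suc r)) * (j * wc 0 (j - 1) r)" using Suc by simp
  also have "\<dots> = j * ((j - 1 - real r) * wc 0 (j - 1) r)" by (simp add: algebra_simps)
  also have "\<dots> = j * wc 0 (j - 1) (Suc r)" by simp
  finally show ?case .
qed

lemma FL: fixes j :: real shows "wc (Suc a) j (Suc r) = wc a (j + 1) (Suc r) + j * wc (Suc a) (j - 1) r"
proof (induction a arbitrary: r j)
  case 0
  show ?case
  proof (induction r arbitrary: j)
    case 0 then show ?case by simp
  next
    case (Suc r)
    have e1: "wc 1 j (Suc r) = wc 0 (j+1) (Suc r) + j * wc 1 (j - 1) r" using Suc by simp
    have e2: "wc 0 j (Suc (Suc r)) = j * wc 0 (j - 1) (Suc r)" by (rule FL0)
    have e3: "wc 0 (j + 1) (Suc (Suc r)) = (j + 1 - real (Suc r)) * wc 0 (j+1) (Suc r)" by simp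
    have e4: "wc 1 (j - 1) (Suc r) = wc 0 (j - 1) (Suc r) + (j - 1 + 1 - real r) * wc 1 (j - 1) r"
      by simp
    have e5: "wc 1 j (Suc (Suc r)) = wc 0 j (Suc (Suc r)) + (j + 1 - real (Suc r)) * wc 1 j (Suc r)"
      by simp
    show ?case
      unfolding One_nat_def[symmetric] e5 e1 e2 e3 e4 by (simp add: algebra_simps)
  qed
next
  case (Suc a)
  note IHa = Suc.IH
  show ?case
  proof (induction r arbitrary: j)
    case 0
    have e1: "wc (Suc a) j 1 = wc a (j + 1) 1 + j" using IHa[where r=0 and j=j] by simp
    have e2: "wc (Suc a) (j + 1) 1 = wc a (j + 1) 1 + (j + 1 + real (Suc a))" by simp
    have e3: "wc (Suc (Suc a)) j 1 = wc (Suc a) j 1 + (j + real (Suc (Suc a)))" by simp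
    show ?case unfolding One_nat_def[symmetric] using e1 e2 e3 by (simp add: algebra_simps)
  next
    case (Suc r)
    note IHr = Suc.IH
    have o: "wc (Suc a) j (Suc (Suc r)) = wc a (j + 1) (Suc (Suc r)) + j * wc (Suc a) (j - 1) (Suc r)"
      by (rule IHa)
    have e0: "wc (Suc (Suc a)) j (Suc (Suc r)) = wc (Suc a) j (Suc (Suc r)) + (j + real (Suc (Suc a)) - real (Suc r)) * wc (Suc (Suc a)) j (Suc r)"
      by (rule wc.simps(3))
    have e1: "wc (Suc a) (j + 1) (Suc (Suc r)) = wc a (j + 1) (Suc (Suc r)) + (j + 1 + real (Suc a) - real (Suc r)) * wc (Suc a) (j + 1) (Suc r)"
      by (rule wc.simps(3))
    have e2: "wc (Suc (Suc a)) (j - 1) (Suc r) = wc (Suc a) (j - 1) (Suc r) + (j - 1 + real (Suc (Suc a)) - real r) * wc (Suc (Suc a)) (j - 1) r"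
      by (rule wc.simps(3))
    have i1: "wc (Suc (Suc a)) j (Suc r) = wc (Suc a) (j + 1) (Suc r) + j * wc (Suc (Suc a)) (j - 1) r"
      by (rule IHr)
    show ?case
      by (simp only: e0 e1 e2 i1 o) (simp add: algebra_simps)
  qed
qed

lemma FLall: fixes j :: real shows "wc i j r = (if i = 0 then (if r = 0 then 1 else 0) else wc (i - 1) (j + 1) r)
    + (if r = 0 then 0 else j * wc i (j - 1) (r - 1))"
  by (cases i; cases r) (simp_all add: FL0 FL del: wc.simps(2,3))

definition cf :: "nat \<Rightarrow> nat \<Rightarrow> real" where
  "cf a r = (if r \<le> a then fact (a + r) / (fact (a - r) * fact r * 2 ^ r) else 0)"

lemma cf_alg:
  fixes F X Y Z m r :: real
  assumes "X > 0" "Y > 0" "Z > 0" "m \<ge> 0" "r \<ge> 0"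
  shows "F / (X * ((r + 1) * Y) * (2 * Z)) + (m + 2) * (F / (((m + 2) * ((m + 1) * X)) * Y * Z))
       = ((m + 2 * r + 3) * F) / (((m + 1) * X) * ((r + 1) * Y) * (2 * Z))"
proof -
  have p: "r + 1 > 0" "m + 1 > 0" "m + 2 > 0" using assms by auto
  have a: "(m + 2) * (F / (((m + 2) * ((m + 1) * X)) * Y * Z)) = (2 * (r + 1) * F) / (((m + 1) * X) * ((r + 1) * Y) * (2 * Z))"
    using p assms by (simp add: divide_simps)
  have b: "F / (X * ((r + 1) * Y) * (2 * Z)) = ((m + 1) * F) / (((m + 1) * X) * ((r + 1) * Y) * (2 * Z))"
    using p assms by (simp add: divide_simps)
  show ?thesis unfolding a b add_divide_distrib[symmetric] by (simp add: algebra_simps)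
qed

lemma cf_rec:
  assumes "r + 1 \<le> a"
  shows "cf a (Suc r) + (real a + 1 - real r) * cf (Suc a) r = cf (Suc a) (Suc r)"
proof -
  define m where "m = a - r - 1"
  have a: "a = m + r + 1" using assms by (simp add: m_def)
  define N where "N = m + 2*r + 2"
  have 1: "a - Suc r = m" "Suc a - r = Suc (Suc m)" "Suc a - Suc r = Suc m" "a + Suc r = N"
    "Suc a + r = N" "Suc a + Suc r = Suc N" "real a + 1 - real r = real m + 2" 
    "Suc r \<le> a" "r \<le> Suc a" "Suc r \<le> Suc a" using a by (auto simp: N_def)
  have f1: "fact (Suc (Suc m)) = (real m + 2) * ((real m + 1) * (fact m :: real))"
    by (simp add: algebra_simps)
  have f2: "fact (Suc m) = (real m + 1) * (fact m :: real)" by simp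
  have f3: "fact (Suc r) = (real r + 1) * (fact r :: real)" by simp
  have f4: "fact (Suc N) = (real m + 2 * real r + 3) * (fact N :: real)" by (simp add: N_def)
  have p: "(2::real) ^ Suc r = 2 * 2 ^ r" by simp
  have "cf a (Suc r) + (real a + 1 - real r) * cf (Suc a) r
     = fact N / (fact m * ((real r + 1) * fact r) * (2 * 2 ^ r))
       + (real m + 2) * (fact N / (((real m + 2) * ((real m + 1) * fact m)) * fact r * 2 ^ r))"
    by (simp only: cf_def 1 if_True f1 f3 p)
  also have "\<dots> = ((real m + 2 * real r + 3) * fact N) / (((real m + 1) * fact m) * ((real r + 1) * fact r) * (2 * 2 ^ r))"
    by (rule cf_alg) auto
  also have "\<dots> = cf (Suc a) (Suc r)"
    by (simp only: cf_def 1 if_True f2 f3 f4 p)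
  finally show ?thesis .
qed

lemma cf_diag: "cf a (Suc a) + (real a + 1 - real a) * cf (Suc a) a = cf (Suc a) (Suc a)"
proof -
  have e: "Suc a + a = Suc (2 * a)" "Suc a + Suc a = Suc (Suc (2 * a))" "Suc a - a = 1" "Suc a - Suc a = 0" by auto
  have f0: "fact (Suc (Suc (2 * a))) = of_nat (Suc (Suc (2 * a))) * (fact (Suc (2 * a)) :: real)"
    by (rule fact_Suc)
  have f: "fact (Suc (Suc (2 * a))) = (2 * real a + 2) * (fact (Suc (2 * a)) :: real)"
    "fact (Suc a) = (real a + 1) * (fact a :: real)"
    unfolding f0 by simp_all
  have p: "(2::real) ^ Suc a = 2 * 2 ^ a" by simp
  have h: "(2 * c + 2) * X / ((c + 1) * Y * (2 * Z)) = X / (Y * Z)" if "c \<ge> 0" "Y > 0" "Z > 0" for c X Y Z :: real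
  proof -
    have c: "c + 1 \<noteq> 0" using that by auto
    have "(2 * c + 2) * X / ((c + 1) * Y * (2 * Z)) = ((c + 1) * (2 * X)) / ((c + 1) * (2 * (Y * Z)))"
      by (simp add: algebra_simps)
    also have "\<dots> = (2 * X) / (2 * (Y * Z))" using c by (rule mult_divide_mult_cancel_left)
    also have "\<dots> = X / (Y * Z)" by simp
    finally show ?thesis .
  qed
  have "cf (Suc a) (Suc a) = (2 * real a + 2) * fact (Suc (2 * a)) / ((real a + 1) * fact a * (2 * 2 ^ a))"
    unfolding cf_def e f p by simp
  also have "\<dots> = fact (Suc (2 * a)) / (fact a * 2 ^ a)"
    by (rule h) auto
  finally show ?thesis unfolding cf_def e by simp
qed

lemma wc_closed: "wc a 0 r = cf a r"
proof (induction a arbitrary: r)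
  case 0
  show ?case
  proof (induction r)
    case (Suc r) then show ?case by (cases r) (auto simp: cf_def)
  qed (simp add: cf_def)
next
  case (Suc a)
  note IHa = Suc.IH
  show ?case
  proof (induction r)
    case 0 then show ?case by (simp add: cf_def)
  next
    case (Suc r)
    have "wc (Suc a) 0 (Suc r) = cf a (Suc r) + (real a + 1 - real r) * cf (Suc a) r"
      using IHa Suc.IH by simp
    also have "\<dots> = cf (Suc a) (Suc r)"
    proof (cases "r + 1 \<le> a")
      case True then show ?thesis by (rule cf_rec)
    next
      case False
      then consider "r = a" | "r = Suc a" | "r > Suc a" by linarith
      then show ?thesis
      proof cases
        case 1 then show ?thesis using cf_diag by simp
      qed (auto simp: cf_def)
    qed
    finally show ?case .
  qed
qed

lemma expand:
  assumes fc: "continuous_on {0..1} f"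
    and fd: "\<forall>x\<ge>0. fd 0 x = f x" "\<forall>n. \<forall>x\<ge>0. (fd n has_vector_derivative fd (Suc n) x) (at x within {0..})"
    and t: "t \<in> {0<..<1::real}"
  shows "2 * Suc i + j \<le> n \<Longrightarrow> (Dop ^^ n) (Gfun f (Suc i) j) t =
    (\<Sum>r\<le>i+j. complex_of_real (4 ^ Suc i * fact (Suc i) * (-2) ^ r * wc i (real j) r)
        * (Dop ^^ (n - Suc i - r)) (Gfun f 0 (Suc i + j - r)) t)"
proof (induction n arbitrary: i j)
  case 0 then show ?case by simp
next
  case (Suc m)
  have sm: "smooth01 (Gfun f a b)" for a b by (rule smooth_G[OF fc fd])
  define K :: real where "K = 4 ^ Suc i * fact (Suc i)"
  define B where "B = (\<lambda>a b. (Dop ^^ a) (Gfun f 0 b) t)"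
  define A1 where "A1 = (\<lambda>r. if i = 0 then (if r = 0 then 1 else 0) else wc (i - 1) (real j + 1) r)"
  define A2 where "A2 = (\<lambda>r::nat. if r = 0 then 0 else real j * wc i (real j - 1) (r - 1))"
  have "(Dop ^^ Suc m) (Gfun f (Suc i) j) t = (Dop ^^ m) (Dop (Gfun f (Suc i) j)) t"
    by (simp add: funpow_Suc_right del: funpow.simps)
  also have "\<dots> = (Dop ^^ m) (\<lambda>s. of_nat (4 * Suc i) * Gfun f i (j + 1) s + (- of_nat (2 * j)) * Gfun f (Suc i) (j - 1) s) t"
    by (rule Dopn_local[OF _ t]) (rule Dop_G[OF fc])
  also have "\<dots> = of_nat (4 * Suc i) * (Dop ^^ m) (Gfun f i (j + 1)) t + (- of_nat (2 * j)) * (Dop ^^ m) (Gfun f (Suc i) (j - 1)) t"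
    by (rule Dopn_lin[OF sm sm t])
  also have X: "of_nat (4 * Suc i) * (Dop ^^ m) (Gfun f i (j + 1)) t
      = (\<Sum>r\<le>i+j. complex_of_real (K * (-2) ^ r * A1 r) * B (Suc m - Suc i - r) (Suc i + j - r))"
  proof (cases i)
    case 0
    have "(\<Sum>r\<le>i+j. complex_of_real (K * (-2) ^ r * A1 r) * B (Suc m - Suc i - r) (Suc i + j - r))
        = (\<Sum>r\<le>i+j. if r = 0 then complex_of_real K * B m (Suc j) else 0)"
      by (rule sum.cong) (auto simp: A1_def 0)
    also have "\<dots> = complex_of_real K * B m (Suc j)" by simp
    finally show ?thesis by (simp add: K_def B_def 0)
  next
    case (Suc i')
    have le: "2 * Suc i' + (j + 1) \<le> m" using Suc.prems Suc by simp
    have "of_nat (4 * Suc i) * (Dop ^^ m) (Gfun f i (j + 1)) t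
       = of_nat (4 * Suc i) * (\<Sum>r\<le>i'+(j+1). complex_of_real (4 ^ Suc i' * fact (Suc i') * (-2) ^ r * wc i' (real (j+1)) r)
        * (Dop ^^ (m - Suc i' - r)) (Gfun f 0 (Suc i' + (j+1) - r)) t)"
      using Suc.IH[OF le] Suc by simp
    also have "\<dots> = (\<Sum>r\<le>i+j. complex_of_real (K * (-2) ^ r * A1 r) * B (Suc m - Suc i - r) (Suc i + j - r))"
      unfolding sum_distrib_left
    proof (rule sum.cong)
      fix r assume "r \<in> {..i + j}"
      have "complex_of_real (K * (-2) ^ r * A1 r) = of_nat (4 * Suc i) * complex_of_real (4 ^ Suc i' * fact (Suc i') * (-2) ^ r * wc i' (real (j+1)) r)"
        by (simp add: K_def A1_def Suc algebra_simps)
      moreover have "Suc m - Suc i - r = m - Suc i' - r" "Suc i + j - r = Suc i' + (j+1) - r" using Suc by auto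
      ultimately show "of_nat (4 * Suc i) * (complex_of_real (4 ^ Suc i' * fact (Suc i') * (-2) ^ r * wc i' (real (j+1)) r)
        * (Dop ^^ (m - Suc i' - r)) (Gfun f 0 (Suc i' + (j+1) - r)) t)
        = complex_of_real (K * (-2) ^ r * A1 r) * B (Suc m - Suc i - r) (Suc i + j - r)"
        by (simp add: B_def)
    qed (simp add: Suc)
    finally show ?thesis .
  qed
  also have Y: "(- of_nat (2 * j)) * (Dop ^^ m) (Gfun f (Suc i) (j - 1)) t
      = (\<Sum>r\<le>i+j. complex_of_real (K * (-2) ^ r * A2 r) * B (Suc m - Suc i - r) (Suc i + j - r))"
  proof (cases j)
    case 0
    have "A2 r = 0" for r unfolding A2_def 0 by simp
    then show ?thesis using 0 by simp
  next
    case (Suc j')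
    have le: "2 * Suc i + j' \<le> m" using Suc.prems Suc by simp
    have "(- of_nat (2 * j)) * (Dop ^^ m) (Gfun f (Suc i) (j - 1)) t
       = (- of_nat (2 * j)) * (\<Sum>r\<le>i+j'. complex_of_real (4 ^ Suc i * fact (Suc i) * (-2) ^ r * wc i (real j') r)
        * (Dop ^^ (m - Suc i - r)) (Gfun f 0 (Suc i + j' - r)) t)"
      using Suc.IH[OF le] Suc by simp
    also have "\<dots> = (\<Sum>r\<le>i+j'. complex_of_real (K * (-2) ^ Suc r * A2 (Suc r)) * B (Suc m - Suc i - Suc r) (Suc i + j - Suc r))"
      unfolding sum_distrib_left
    proof (rule sum.cong)
      fix r assume "r \<in> {..i + j'}"
      have "complex_of_real (K * (-2) ^ Suc r * A2 (Suc r)) = (- of_nat (2 * j)) * complex_of_real (4 ^ Suc i * fact (Suc i) * (-2) ^ r * wc i (real j') r)"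
        by (simp add: K_def A2_def Suc algebra_simps)
      moreover have "Suc m - Suc i - Suc r = m - Suc i - r" "Suc i + j - Suc r = Suc i + j' - r" using Suc by auto
      ultimately show "(- of_nat (2 * j)) * (complex_of_real (4 ^ Suc i * fact (Suc i) * (-2) ^ r * wc i (real j') r)
        * (Dop ^^ (m - Suc i - r)) (Gfun f 0 (Suc i + j' - r)) t)
        = complex_of_real (K * (-2) ^ Suc r * A2 (Suc r)) * B (Suc m - Suc i - Suc r) (Suc i + j - Suc r)"
        by (simp add: B_def)
    qed simp
    also have "\<dots> = (\<Sum>r\<le>Suc (i+j'). complex_of_real (K * (-2) ^ r * A2 r) * B (Suc m - Suc i - r) (Suc i + j - r))"
    proof -
      have "A2 0 = 0" by (simp add: A2_def)
      then show ?thesis unfolding sum.atMost_Suc_shift by simp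
    qed
    also have "Suc (i + j') = i + j" using Suc by simp
    finally show ?thesis .
  qed
  also have "(\<Sum>r\<le>i+j. complex_of_real (K * (-2) ^ r * A1 r) * B (Suc m - Suc i - r) (Suc i + j - r))
     + (\<Sum>r\<le>i+j. complex_of_real (K * (-2) ^ r * A2 r) * B (Suc m - Suc i - r) (Suc i + j - r))
     = (\<Sum>r\<le>i+j. complex_of_real (K * (-2) ^ r * wc i (real j) r) * B (Suc m - Suc i - r) (Suc i + j - r))"
    unfolding sum.distrib[symmetric]
  proof (rule sum.cong)
    fix r
    have "wc i (real j) r = A1 r + A2 r" unfolding A1_def A2_def by (rule FLall)
    then show "complex_of_real (K * (-2) ^ r * A1 r) * B (Suc m - Suc i - r) (Suc i + j - r)
      + complex_of_real (K * (-2) ^ r * A2 r) * B (Suc m - Suc i - r) (Suc i + j - r)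
      = complex_of_real (K * (-2) ^ r * wc i (real j) r) * B (Suc m - Suc i - r) (Suc i + j - r)"
      by (simp add: algebra_simps)
  qed simp
  finally show ?case by (simp add: K_def B_def)
qed

theorem theorem3p7:
  fixes f :: "real \<Rightarrow> complex" and \<rho> :: real and k :: nat and t :: real
  assumes "smooth_on_nonneg f"
    and "\<rho> < 1"
    and "\<forall>u\<ge>0. u \<notin> {0..\<rho>} \<longrightarrow> f u = 0"
    and "k \<ge> 1"
    and "0 < t" and "t < 1"
  shows "(Dop ^^ (2*k)) (hfun f k) t = (Dop ^^ (2*k)) (Gfun f k 0) t
    \<and> (Dop ^^ (2*k)) (Gfun f k 0) t =
        of_real (fact k * 4 ^ k) *
        (\<Sum>j = 0..k-1. of_real ((-1) ^ j * fact (k - 1 + j) / (fact (k - 1 - j) * fact j))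
            * (Dop ^^ (k - j)) (Gfun f 0 (k - j)) t)"
proof -
  obtain fd :: "nat \<Rightarrow> real \<Rightarrow> complex" where fd0: "\<forall>x\<ge>0. fd 0 x = f x"
    and fdd: "\<forall>n. \<forall>x\<ge>0. (fd n has_vector_derivative fd (Suc n) x) (at x within {0..})"
    using assms(1) unfolding smooth_on_nonneg_def by blast
  have "continuous_on {0..} (fd 0)"
    unfolding continuous_on_eq_continuous_within
    using fdd has_vector_derivative_continuous by fastforce
  then have "continuous_on {0..1} (fd 0)" by (rule continuous_on_subset) auto
  then have fc: "continuous_on {0..1} f"
    by (rule continuous_on_eq) (use fd0 in auto)
  have t: "t \<in> {0<..<1}" using assms by auto
  have h: "hfun f k = Gfun f k 0" by (rule ext) (simp add: hfun_def Gfun_def)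
  obtain i where k: "k = Suc i" using assms(4) by (cases k) auto
  have E: "(Dop ^^ (2*k)) (Gfun f k 0) t =
    (\<Sum>r\<le>i+0. complex_of_real (4 ^ Suc i * fact (Suc i) * (-2) ^ r * wc i (real 0) r)
        * (Dop ^^ (2*k - Suc i - r)) (Gfun f 0 (Suc i + 0 - r)) t)"
    unfolding k by (rule expand[OF fc fd0 fdd t]) simp
  also have "\<dots> = of_real (fact k * 4 ^ k) *
        (\<Sum>j = 0..k-1. of_real ((-1) ^ j * fact (k - 1 + j) / (fact (k - 1 - j) * fact j))
            * (Dop ^^ (k - j)) (Gfun f 0 (k - j)) t)"
    unfolding sum_distrib_left atLeast0AtMost
  proof (rule sum.cong)
    show "{..i + 0} = {..k - 1}" using k by simp
  next
    fix r assume r: "r \<in> {..k - 1}"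
    then have ri: "r \<le> i" using k by simp
    have m: "(-2::real) ^ r = (-1) ^ r * 2 ^ r" by (subst power_mult_distrib[symmetric]) simp
    have w: "wc i (real 0) r = fact (i + r) / (fact (i - r) * fact r * 2 ^ r)"
      using wc_closed[of i r] ri by (simp add: cf_def)
    have "(4 ^ Suc i * fact (Suc i) * (-2) ^ r * wc i (real 0) r :: real)
        = fact k * 4 ^ k * ((-1) ^ r * fact (k - 1 + r) / (fact (k - 1 - r) * fact r))"
      unfolding w m using k by (simp add: field_simps)
    moreover have "2*k - Suc i - r = k - r" "Suc i + 0 - r = k - r" using k by auto
    ultimately show "complex_of_real (4 ^ Suc i * fact (Suc i) * (-2) ^ r * wc i (real 0) r)
        * (Dop ^^ (2*k - Suc i - r)) (Gfun f 0 (Suc i + 0 - r)) t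
      = of_real (fact k * 4 ^ k) * (of_real ((-1) ^ r * fact (k - 1 + r) / (fact (k - 1 - r) * fact r))
            * (Dop ^^ (k - r)) (Gfun f 0 (k - r)) t)"
      by (simp del: of_real_mult add: of_real_mult[symmetric])
  qed
  finally show ?thesis using h by simp
qed

end
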